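(* Let $G$ be a connected $K_4$-free graph whose diamonds are mutually edge-disjoint. Then $$|E(G)|-|V(G)|-2t(G)+d(G)+1 \le p(G) \le |E(G)|-|V(G)|-t(G)+1.$$ Moreover, the first inequality is an equality if $G^-$ is connected, and the second inequality is an equality if $G^-$ has exactly $2t(G)-d(G)+1$ connected components.
   Context: All graphs are finite and simple. For an acyclic digraph $D$, the phylogeny graph $P(D)$ is the graph on $V(D)$ in which distinct vertices $u,v$ are adjacent if and only if $(u,v)\in A(D)$, or $(v,u)\in A(D)$, or there is a vertex $w$ with $(u,w),(v,w)\in A(D)$. A phylogeny digraph for a graph $G$ is an acyclic digraph $D$ such that $G$ is an induced subgraph of $P(D)$ and $D$ has no arc from a vertex of $V(D)\setminus V(G)$ to a vertex of $V(G)$. The phylogeny number $p(G)$ is the minimum of $|V(D)\setminus V(G)|$ over all phylogeny digraphs $D$ for $G$. A diamond is a subgraph isomorphic to $K_4$ minus one edge (two triangles sharing an edge). $t(G)$ is the number of triangles of $G$ and $d(G)$ the number of diamonds of $G$. A triangle edge is an edge lying on some triangle; $G^-$ is the graph obtained from $G$ by deleting all triangle edges (keeping all vertices). *)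

theory Defs
  imports Main
begin

definition simple_graph :: "'a set \<Rightarrow> 'a set set \<Rightarrow> bool" where
  "simple_graph V E \<longleftrightarrow> finite V \<and>
     (\<forall>e\<in>E. \<exists>u v. e = {u, v} \<and> u \<noteq> v \<and> u \<in> V \<and> v \<in> V)"

definition edge_rel :: "'a set set \<Rightarrow> ('a \<times> 'a) set" where
  "edge_rel E = {(u, v). {u, v} \<in> E \<and> u \<noteq> v}"

definition connected_graph :: "'a set \<Rightarrow> 'a set set \<Rightarrow> bool" where
  "connected_graph V E \<longleftrightarrow> V \<noteq> {} \<and> (\<forall>u\<in>V. \<forall>v\<in>V. (u, v) \<in> (edge_rel E)\<^sup>*)"

definition num_components :: "'a set \<Rightarrow> 'a set set \<Rightarrow> nat" where
  "num_components V E = card ((\<lambda>v. {u \<in> V. (v, u) \<in> (edge_rel E)\<^sup>*}) ` V)"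

definition triangles :: "'a set \<Rightarrow> 'a set set \<Rightarrow> 'a set set" where
  "triangles V E = {T. \<exists>a b c. T = {a, b, c} \<and> a \<in> V \<and> b \<in> V \<and> c \<in> V \<and>
      a \<noteq> b \<and> a \<noteq> c \<and> b \<noteq> c \<and> {a, b} \<in> E \<and> {a, c} \<in> E \<and> {b, c} \<in> E}"

definition num_triangles :: "'a set \<Rightarrow> 'a set set \<Rightarrow> nat" where
  "num_triangles V E = card (triangles V E)"

text \<open>A diamond (subgraph isomorphic to K4 minus an edge) is identified with its edge set:
  two triangles abc and abx sharing the edge ab.\<close>
definition diamonds :: "'a set \<Rightarrow> 'a set set \<Rightarrow> 'a set set set" where
  "diamonds V E = {D. \<exists>a b c x. a \<in> V \<and> b \<in> V \<and> c \<in> V \<and> x \<in> V \<and>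
      distinct [a, b, c, x] \<and>
      D = {{a, b}, {a, c}, {b, c}, {a, x}, {b, x}} \<and> D \<subseteq> E}"

definition num_diamonds :: "'a set \<Rightarrow> 'a set set \<Rightarrow> nat" where
  "num_diamonds V E = card (diamonds V E)"

definition K4_free :: "'a set \<Rightarrow> 'a set set \<Rightarrow> bool" where
  "K4_free V E \<longleftrightarrow> \<not> (\<exists>a b c x. a \<in> V \<and> b \<in> V \<and> c \<in> V \<and> x \<in> V \<and>
      distinct [a, b, c, x] \<and>
      {{a, b}, {a, c}, {b, c}, {a, x}, {b, x}, {c, x}} \<subseteq> E)"

definition triangle_edges :: "'a set \<Rightarrow> 'a set set \<Rightarrow> 'a set set" where
  "triangle_edges V E = {e \<in> E. \<exists>T \<in> triangles V E. e \<subseteq> T}"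

text \<open>G minus its triangle edges (same vertex set).\<close>
definition minus_edges :: "'a set \<Rightarrow> 'a set set \<Rightarrow> 'a set set" where
  "minus_edges V E = E - triangle_edges V E"

definition phylo_adj :: "('b \<times> 'b) set \<Rightarrow> 'b \<Rightarrow> 'b \<Rightarrow> bool" where
  "phylo_adj A u v \<longleftrightarrow> u \<noteq> v \<and>
     ((u, v) \<in> A \<or> (v, u) \<in> A \<or> (\<exists>w. (u, w) \<in> A \<and> (v, w) \<in> A))"

text \<open>A phylogeny digraph for G = (V, E): vertices of G are embedded via Inl, the digraph
  has vertex set W (finite) containing them, arcs inside W, is acyclic, has no arc from a
  new vertex into V(G), and G is the induced subgraph of P(D) on V(G).\<close>
definition phylogeny_digraph ::
  "'a set \<Rightarrow> 'a set set \<Rightarrow> ('a + nat) set \<Rightarrow> (('a + nat) \<times> ('a + nat)) set \<Rightarrow> bool" where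
  "phylogeny_digraph V E W A \<longleftrightarrow> finite W \<and> Inl ` V \<subseteq> W \<and> A \<subseteq> W \<times> W \<and> acyclic A \<and>
     (\<forall>x y. (x, y) \<in> A \<longrightarrow> x \<notin> Inl ` V \<longrightarrow> y \<notin> Inl ` V) \<and>
     (\<forall>u\<in>V. \<forall>v\<in>V. u \<noteq> v \<longrightarrow> ({u, v} \<in> E \<longleftrightarrow> phylo_adj A (Inl u) (Inl v)))"

definition phylogeny_number :: "'a set \<Rightarrow> 'a set set \<Rightarrow> nat" where
  "phylogeny_number V E = (LEAST k. \<exists>W A. phylogeny_digraph V E W A \<and> card (W - Inl ` V) = k)"

end

theory Submission
  imports Defs
begin



locale G =
  fixes V :: "'a set" and E :: "'a set set"
  assumes sg: "simple_graph V E"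
    and k4: "K4_free V E"
    and dj: "\<forall>D1\<in>diamonds V E. \<forall>D2\<in>diamonds V E. D1 \<noteq> D2 \<longrightarrow> D1 \<inter> D2 = {}"
begin

abbreviation "Tri \<equiv> triangles V E"
abbreviation "TE \<equiv> triangle_edges V E"
abbreviation "NTE \<equiv> minus_edges V E"

lemma finV: "finite V" using sg by (simp add: simple_graph_def)

lemma edgeE: assumes "e \<in> E" obtains u v where "e = {u,v}" "u \<noteq> v" "u \<in> V" "v \<in> V"
  using sg assms by (auto simp: simple_graph_def)

lemma E_sub: "E \<subseteq> Pow V"
proof
  fix e assume "e \<in> E"
  then obtain u v where "e = {u,v}" "u \<in> V" "v \<in> V" by (rule edgeE)
  thus "e \<in> Pow V" by auto
qed

lemma finE: "finite E" by (rule finite_subset[OF E_sub]) (simp add: finV)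

lemma edge_sym: "{u,v} \<in> E \<Longrightarrow> {v,u} \<in> E" by (simp add: insert_commute)

lemma card_edge: "e \<in> E \<Longrightarrow> card e = 2" by (erule edgeE) simp

lemma edge_ne: "{u,v} \<in> E \<Longrightarrow> u \<noteq> v" using card_edge by fastforce

lemma edge_V: "{u,v} \<in> E \<Longrightarrow> u \<in> V \<and> v \<in> V" using E_sub by auto

lemma triI: "{a,b} \<in> E \<Longrightarrow> {a,c} \<in> E \<Longrightarrow> {b,c} \<in> E \<Longrightarrow> {a,b,c} \<in> Tri"
  unfolding triangles_def
  by (rule CollectI, rule exI[of _ a], rule exI[of _ b], rule exI[of _ c]) (simp add: edge_V edge_ne)

lemma triE: assumes "T \<in> Tri"
  obtains a b c where "T = {a,b,c}" "{a,b} \<in> E" "{a,c} \<in> E" "{b,c} \<in> E"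
    "a \<noteq> b" "a \<noteq> c" "b \<noteq> c" "a \<in> V" "b \<in> V" "c \<in> V"
  using assms unfolding triangles_def by auto

lemma tri_sub: "T \<in> Tri \<Longrightarrow> T \<subseteq> V" by (auto elim!: triE)

lemma card_tri: "T \<in> Tri \<Longrightarrow> card T = 3" by (auto elim!: triE)

lemma finTri: "finite Tri" by (rule finite_subset[of _ "Pow V"]) (auto dest: tri_sub simp: finV)

lemma tri_edge: assumes "T \<in> Tri" "x \<in> T" "y \<in> T" "x \<noteq> y" shows "{x,y} \<in> E"
  using assms by (auto elim!: triE simp: insert_commute)

lemma tri_third: assumes "T \<in> Tri" "a \<in> T" "b \<in> T" "a \<noteq> b"
  obtains x where "T = {a,b,x}" "x \<noteq> a" "x \<noteq> b"
  using assms by (elim triE) (auto simp: insert_commute)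

lemma diaI: assumes "{a,b} \<in> E" "{a,c} \<in> E" "{b,c} \<in> E" "{a,x} \<in> E" "{b,x} \<in> E" "c \<noteq> x"
  shows "{{a, b}, {a, c}, {b, c}, {a, x}, {b, x}} \<in> diamonds V E"
proof -
  have "a \<in> V" "b \<in> V" "c \<in> V" "x \<in> V" using assms edge_V by auto
  moreover have "distinct [a,b,c,x]" using assms edge_ne by auto
  ultimately show ?thesis unfolding diamonds_def using assms
    by (intro CollectI exI[of _ a] exI[of _ b] exI[of _ c] exI[of _ x]) simp
qed

lemma noK4: assumes "{a,b} \<in> E" "{a,c} \<in> E" "{b,c} \<in> E" "{a,x} \<in> E" "{b,x} \<in> E" "{c,x} \<in> E"
  shows False
proof -
  have "a \<in> V" "b \<in> V" "c \<in> V" "x \<in> V" using assms edge_V by auto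
  moreover have "distinct [a,b,c,x]" using assms edge_ne by auto
  moreover have "{{a, b}, {a, c}, {b, c}, {a, x}, {b, x}, {c, x}} \<subseteq> E" using assms by simp
  ultimately have "\<exists>a b c x. a \<in> V \<and> b \<in> V \<and> c \<in> V \<and> x \<in> V \<and>
      distinct [a, b, c, x] \<and> {{a, b}, {a, c}, {b, c}, {a, x}, {b, x}, {c, x}} \<subseteq> E" by blast
  thus False using k4 unfolding K4_free_def by blast
qed

lemma NP:
  assumes "{a,b} \<in> E" "{a,c} \<in> E" "{b,c} \<in> E"
    and "T1 \<in> Tri" "a \<in> T1" "b \<in> T1" "T1 \<noteq> {a,b,c}"
    and "T2 \<in> Tri" "a \<in> T2" "c \<in> T2" "T2 \<noteq> {a,b,c}"
  shows False
proof -
  have ab: "a \<noteq> b" "a \<noteq> c" "b \<noteq> c" using assms(1-3) edge_ne by auto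
  obtain x where x: "T1 = {a,b,x}" "x \<noteq> a" "x \<noteq> b" using tri_third[OF assms(4-6) ab(1)] by blast
  obtain y where y: "T2 = {a,c,y}" "y \<noteq> a" "y \<noteq> c" using tri_third[OF assms(8-10) ab(2)] by blast
  have xc: "x \<noteq> c" using x assms(7) by auto
  have yb: "y \<noteq> b" using y assms(11) by (auto simp: insert_commute)
  have ax: "{a,x} \<in> E" "{b,x} \<in> E" using tri_edge[OF assms(4)] x by auto
  have ay: "{a,y} \<in> E" "{c,y} \<in> E" using tri_edge[OF assms(8)] y by auto
  have V: "a \<in> V" "b \<in> V" "c \<in> V" "x \<in> V" "y \<in> V" using edge_V ax ay assms(1) by auto
  define D1 where "D1 = {{a, b}, {a, c}, {b, c}, {a, x}, {b, x}}"
  define D2 where "D2 = {{a, c}, {a, b}, {c, b}, {a, y}, {c, y}}"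
  have D1: "D1 \<in> diamonds V E" unfolding D1_def
    using diaI[OF assms(1-3) ax xc[symmetric]] .
  have D2: "D2 \<in> diamonds V E" unfolding D2_def
    using diaI[OF assms(2,1) edge_sym[OF assms(3)] ay yb[symmetric]] .
  have "{a,b} \<in> D1 \<inter> D2" unfolding D1_def D2_def by auto
  hence "D1 = D2" using dj D1 D2 by blast
  hence "{a,x} \<in> D2" unfolding D1_def by auto
  hence "{a,x} = {a,c} \<or> {a,x} = {a,b} \<or> {a,x} = {c,b} \<or> {a,x} = {a,y} \<or> {a,x} = {c,y}"
    unfolding D2_def by simp
  hence "x = y" using ab x xc yb y by (auto simp: doubleton_eq_iff)
  hence "{c,x} \<in> E" using ay by simp
  thus False using noK4[OF assms(1-3) ax] by blast
qed

end



context G begin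

lemma tri3: assumes "{a,b,c} \<in> Tri" shows "a \<noteq> b" "a \<noteq> c" "b \<noteq> c"
proof -
  have "card {a,b,c} = 3" using card_tri[OF assms] .
  thus "a \<noteq> b" "a \<noteq> c" "b \<noteq> c" by (auto simp: card_insert_if split: if_splits)
qed

definition "shared e T \<longleftrightarrow> (\<exists>T'\<in>Tri. e \<subseteq> T' \<and> T' \<noteq> T)"

lemma NP2:
  assumes "{a,b,c} \<in> Tri" "shared {a,b} {a,b,c}" "shared {a,c} {a,b,c}" "b \<noteq> c"
  shows False
proof -
  have "{a,b} \<in> E" "{a,c} \<in> E" "{b,c} \<in> E" using assms(1) tri3[OF assms(1)] tri_edge by auto
  moreover obtain T1 where "T1 \<in> Tri" "{a,b} \<subseteq> T1" "T1 \<noteq> {a,b,c}" using assms(2) shared_def by auto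
  moreover obtain T2 where "T2 \<in> Tri" "{a,c} \<subseteq> T2" "T2 \<noteq> {a,b,c}" using assms(3) shared_def by auto
  ultimately show False using NP[of a b c T1 T2] by auto
qed

lemma priv: assumes "T \<in> Tri"
  obtains e where "e \<in> E" "e \<subseteq> T" "\<not> shared e T"
proof -
  obtain a b c where T: "T = {a,b,c}" "{a,b} \<in> E" "{a,c} \<in> E" "b \<noteq> c" using assms by (rule triE)
  show ?thesis
  proof (cases "shared {a,b} T")
    case False thus ?thesis using that[of "{a,b}"] T by auto
  next
    case True
    show ?thesis
    proof (cases "shared {a,c} T")
      case False thus ?thesis using that[of "{a,c}"] T by auto
    next
      case True2: True
      show ?thesis using NP2[of a b c] True True2 T assms by auto
    qed
  qed
qed

lemma three:
  assumes "T1 \<in> Tri" "T2 \<in> Tri" "T3 \<in> Tri" "T1 \<noteq> T2" "T1 \<noteq> T3" "T2 \<noteq> T3"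
    "a \<in> T1" "b \<in> T1" "a \<in> T2" "b \<in> T2" "a \<in> T3" "b \<in> T3" "a \<noteq> b"
  shows False
proof -
  obtain x where x: "T1 = {a,b,x}" "x \<noteq> a" "x \<noteq> b" using tri_third[OF assms(1,7,8,13)] by blast
  obtain y where y: "T2 = {a,b,y}" "y \<noteq> a" "y \<noteq> b" using tri_third[OF assms(2,9,10,13)] by blast
  obtain z where z: "T3 = {a,b,z}" "z \<noteq> a" "z \<noteq> b" using tri_third[OF assms(3,11,12,13)] by blast
  have d: "x \<noteq> y" "x \<noteq> z" "y \<noteq> z" using x y z assms(4-6) by auto
  have e: "{a,b} \<in> E" "{a,x} \<in> E" "{b,x} \<in> E" "{a,y} \<in> E" "{b,y} \<in> E" "{a,z} \<in> E" "{b,z} \<in> E"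
    using tri_edge assms(1-3) x y z assms(13) by auto
  define D1 where "D1 = {{a, b}, {a, x}, {b, x}, {a, y}, {b, y}}"
  define D2 where "D2 = {{a, b}, {a, x}, {b, x}, {a, z}, {b, z}}"
  have D1: "D1 \<in> diamonds V E" unfolding D1_def using diaI[of a b x y] e d by simp
  have D2: "D2 \<in> diamonds V E" unfolding D2_def using diaI[of a b x z] e d by simp
  have "{a,b} \<in> D1 \<inter> D2" unfolding D1_def D2_def by simp
  hence "D1 = D2" using dj D1 D2 by auto
  hence "{a,y} \<in> D2" unfolding D1_def by (metis insertI1 insertI2)
  hence "{a,y} = {a,b} \<or> {a,y} = {a,x} \<or> {a,y} = {b,x} \<or> {a,y} = {a,z} \<or> {a,y} = {b,z}"
    unfolding D2_def by simp
  thus False using d y assms(13) x by (auto simp: doubleton_eq_iff)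
qed

definition "Mid = {e \<in> E. \<exists>T1\<in>Tri. \<exists>T2\<in>Tri. T1 \<noteq> T2 \<and> e \<subseteq> T1 \<and> e \<subseteq> T2}"

lemma TE_sub: "TE \<subseteq> E" unfolding triangle_edges_def by auto
lemma Mid_sub: "Mid \<subseteq> TE" unfolding Mid_def triangle_edges_def by auto

lemma cnt: assumes "e \<in> E"
  shows "card {T \<in> Tri. e \<subseteq> T} = (if e \<in> TE then 1 else 0) + (if e \<in> Mid then 1 else 0)"
proof -
  obtain a b where ab: "e = {a,b}" "a \<noteq> b" using assms by (rule edgeE)
  show ?thesis
  proof (cases "e \<in> TE")
    case False
    hence "{T \<in> Tri. e \<subseteq> T} = {}" using assms unfolding triangle_edges_def by auto
    hence "card {T \<in> Tri. e \<subseteq> T} = 0" by (simp only: card.empty)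
    moreover have "e \<notin> Mid" using False Mid_sub by auto
    ultimately show ?thesis using False by simp
  next
    case True
    then obtain T where T: "T \<in> Tri" "e \<subseteq> T" unfolding triangle_edges_def by auto
    show ?thesis
    proof (cases "e \<in> Mid")
      case False
      hence "{T' \<in> Tri. e \<subseteq> T'} = {T}" using T assms unfolding Mid_def by auto
      thus ?thesis using False True by simp
    next
      case Mt: True
      then obtain T1 T2 where T12: "T1 \<in> Tri" "T2 \<in> Tri" "T1 \<noteq> T2" "e \<subseteq> T1" "e \<subseteq> T2"
        unfolding Mid_def by auto
      have "{T' \<in> Tri. e \<subseteq> T'} = {T1, T2}"
      proof (intro equalityI subsetI)
        fix T' assume "T' \<in> {T' \<in> Tri. e \<subseteq> T'}"
        hence "T' \<in> Tri" "e \<subseteq> T'" by auto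
        thus "T' \<in> {T1,T2}" using three[of T1 T2 T' a b] T12 ab by auto
      qed (use T12 in auto)
      thus ?thesis using Mt True T12 by simp
    qed
  qed
qed

lemma card_tri_edges: assumes "T \<in> Tri" shows "card {e \<in> E. e \<subseteq> T} = 3"
proof -
  obtain a b c where T: "T = {a,b,c}" "{a,b} \<in> E" "{a,c} \<in> E" "{b,c} \<in> E"
    "a \<noteq> b" "a \<noteq> c" "b \<noteq> c" using assms by (rule triE)
  have "{e \<in> E. e \<subseteq> T} = {{a,b},{a,c},{b,c}}"
  proof (intro equalityI subsetI)
    fix e assume "e \<in> {e \<in> E. e \<subseteq> T}"
    hence "e \<in> E" "e \<subseteq> {a,b,c}" using T by auto
    then obtain u v where "e = {u,v}" "u \<noteq> v" "u \<in> {a,b,c}" "v \<in> {a,b,c}" by (metis edgeE insert_subset)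
    thus "e \<in> {{a,b},{a,c},{b,c}}" by (auto simp: insert_commute)
  qed (use T in auto)
  thus ?thesis using T by (simp add: doubleton_eq_iff)
qed

lemma TE_Mid: "card TE + card Mid = 3 * card Tri"
proof -
  have "(\<Sum>e\<in>E. card {T \<in> Tri. e \<subseteq> T}) = (\<Sum>T\<in>Tri. card {e \<in> E. e \<subseteq> T})"
    using sum.swap_restrict[OF finE finTri, of "\<lambda>_ _. 1::nat" "\<lambda>e T. e \<subseteq> T"] by simp
  also have "\<dots> = (\<Sum>T\<in>Tri. 3)" using card_tri_edges by simp
  also have "\<dots> = 3 * card Tri" by simp
  finally have 1: "(\<Sum>e\<in>E. card {T \<in> Tri. e \<subseteq> T}) = 3 * card Tri" .
  have "(\<Sum>e\<in>E. card {T \<in> Tri. e \<subseteq> T}) =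
        (\<Sum>e\<in>E. (if e \<in> TE then 1 else 0) + (if e \<in> Mid then 1 else 0))"
    using cnt by simp
  also have "\<dots> = (\<Sum>e\<in>E. (if e \<in> TE then 1 else 0)) + (\<Sum>e\<in>E. (if e \<in> Mid then 1 else 0))"
    by (simp add: sum.distrib)
  also have "\<dots> = card (E \<inter> TE) + card (E \<inter> Mid)" by (simp add: sum.If_cases finE)
  also have "\<dots> = card TE + card Mid" using TE_sub Mid_sub by (simp add: Int_absorb1)
  finally show ?thesis using 1 by simp
qed

lemma shared_Mid: "e \<in> Mid \<Longrightarrow> T \<in> Tri \<Longrightarrow> e \<subseteq> T \<Longrightarrow> shared e T"
proof -
  assume a: "e \<in> Mid" "T \<in> Tri" "e \<subseteq> T"
  then obtain T1 T2 where T12: "T1 \<in> Tri" "T2 \<in> Tri" "T1 \<noteq> T2" "e \<subseteq> T1" "e \<subseteq> T2"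
    unfolding Mid_def by auto
  show "shared e T" unfolding shared_def
  proof (cases "T1 = T")
    case True thus "\<exists>T'\<in>Tri. e \<subseteq> T' \<and> T' \<noteq> T" using T12 by auto
  next
    case False thus "\<exists>T'\<in>Tri. e \<subseteq> T' \<and> T' \<noteq> T" using T12 by auto
  qed
qed

lemma dia_Mid:
  assumes "D \<in> diamonds V E"
  obtains a b c x where "D = {{a, b}, {a, c}, {b, c}, {a, x}, {b, x}}" "D \<inter> Mid = {{a,b}}"
    "{a,b} \<in> E" "{a,c} \<in> E" "{b,c} \<in> E" "{a,x} \<in> E" "{b,x} \<in> E" "distinct [a,b,c,x]"
proof -
  obtain a b c x where D: "distinct [a,b,c,x]" "D = {{a, b}, {a, c}, {b, c}, {a, x}, {b, x}}" "D \<subseteq> E"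
    using assms unfolding diamonds_def by auto
  have e: "{a,b} \<in> E" "{a,c} \<in> E" "{b,c} \<in> E" "{a,x} \<in> E" "{b,x} \<in> E" using D by auto
  have T1: "{a,b,c} \<in> Tri" and T2: "{a,b,x} \<in> Tri" using triI e by auto
  have ne: "{a,b,c} \<noteq> {a,b,x}"
  proof
    assume "{a,b,c} = {a,b,x}" hence "x \<in> {a,b,c}" by simp
    thus False using D(1) by auto
  qed
  have sh1: "shared {a,b} {a,b,c}" unfolding shared_def
    by (intro bexI[OF _ T2] conjI) (simp, rule ne[symmetric])
  have sh2: "shared {a,b} {a,b,x}" unfolding shared_def
    by (intro bexI[OF _ T1] conjI) (simp, rule ne)
  have abM: "{a,b} \<in> Mid" unfolding Mid_def
    by (intro CollectI conjI e(1) bexI[OF _ T1] bexI[OF _ T2]) (use ne in auto)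
  have "{a,c} \<notin> Mid"
  proof
    assume "{a,c} \<in> Mid" hence "shared {a,c} {a,b,c}" using shared_Mid T1 by auto
    thus False using NP2[OF T1 sh1] D(1) by auto
  qed
  moreover have "{b,c} \<notin> Mid"
  proof
    assume "{b,c} \<in> Mid" hence "shared {b,c} {b,a,c}" using shared_Mid T1 by (auto simp: insert_commute)
    moreover have "shared {b,a} {b,a,c}" using sh1 by (simp add: insert_commute)
    moreover have "{b,a,c} \<in> Tri" using T1 by (simp add: insert_commute)
    ultimately show False using NP2[of b a c] D(1) by auto
  qed
  moreover have "{a,x} \<notin> Mid"
  proof
    assume "{a,x} \<in> Mid" hence "shared {a,x} {a,b,x}" using shared_Mid T2 by auto
    thus False using NP2[OF T2 sh2] D(1) by auto
  qed
  moreover have "{b,x} \<notin> Mid"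
  proof
    assume "{b,x} \<in> Mid" hence "shared {b,x} {b,a,x}" using shared_Mid T2 by (auto simp: insert_commute)
    moreover have "shared {b,a} {b,a,x}" using sh2 by (simp add: insert_commute)
    moreover have "{b,a,x} \<in> Tri" using T2 by (simp add: insert_commute)
    ultimately show False using NP2[of b a x] D(1) by auto
  qed
  ultimately have "D \<inter> Mid = {{a,b}}" using abM D(2) by auto
  thus ?thesis by (rule that[OF D(2) _ e D(1)])
qed

lemma card_Mid: "card Mid = card (diamonds V E)"
proof -
  define mid where "mid D = (THE e. e \<in> D \<inter> Mid)" for D
  have mid: "D \<in> diamonds V E \<Longrightarrow> mid D \<in> D \<inter> Mid" for D
  proof -
    assume "D \<in> diamonds V E"
    then obtain m where "D \<inter> Mid = {m}" by (rule dia_Mid) blast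
    thus ?thesis unfolding mid_def by simp
  qed
  have "bij_betw mid (diamonds V E) Mid"
  proof (rule bij_betw_imageI)
    show "inj_on mid (diamonds V E)"
    proof (rule inj_onI)
      fix D1 D2 assume "D1 \<in> diamonds V E" "D2 \<in> diamonds V E" "mid D1 = mid D2"
      hence "mid D1 \<in> D1 \<inter> D2" using mid[of D1] mid[of D2] by (metis IntD1 IntI)
      thus "D1 = D2" using dj \<open>D1 \<in> diamonds V E\<close> \<open>D2 \<in> diamonds V E\<close> by auto
    qed
    show "mid ` diamonds V E = Mid"
    proof (intro equalityI subsetI)
      fix e assume "e \<in> mid ` diamonds V E" thus "e \<in> Mid" using mid by auto
    next
      fix e assume eM: "e \<in> Mid"
      then obtain T1 T2 where T12: "T1 \<in> Tri" "T2 \<in> Tri" "T1 \<noteq> T2" "e \<subseteq> T1" "e \<subseteq> T2" "e \<in> E"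
        unfolding Mid_def by auto
      obtain a b where ab: "e = {a,b}" "a \<noteq> b" using T12(6) by (rule edgeE)
      obtain c where c: "T1 = {a,b,c}" "c \<noteq> a" "c \<noteq> b" using tri_third[OF T12(1) _ _ ab(2)] T12 ab by auto
      obtain x where x: "T2 = {a,b,x}" "x \<noteq> a" "x \<noteq> b" using tri_third[OF T12(2) _ _ ab(2)] T12 ab by auto
      have cx: "c \<noteq> x" using c x T12 by auto
      have e: "{a,b} \<in> E" "{a,c} \<in> E" "{b,c} \<in> E" "{a,x} \<in> E" "{b,x} \<in> E"
        using tri_edge T12 c x ab by auto
      define D where "D = {{a, b}, {a, c}, {b, c}, {a, x}, {b, x}}"
      have D: "D \<in> diamonds V E" unfolding D_def using diaI[OF e cx] .
      obtain m where m: "D \<inter> Mid = {m}" using D by (rule dia_Mid) blast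
      have "e \<in> D \<inter> Mid" using eM ab D_def by auto
      hence "mid D = e" using m mid[OF D] by auto
      thus "e \<in> mid ` diamonds V E" using D by force
    qed
  qed
  thus ?thesis by (simp add: bij_betw_same_card)
qed

lemma TE_count: "card TE + card (diamonds V E) = 3 * card Tri"
  using TE_Mid card_Mid by simp

end



context G begin

definition "clq S \<longleftrightarrow> S \<subseteq> V \<and> (\<forall>x\<in>S. \<forall>y\<in>S. x \<noteq> y \<longrightarrow> {x,y} \<in> E)"

lemma clq_class: assumes "clq S" "2 \<le> card S" shows "S \<in> E \<or> S \<in> Tri"
proof -
  have fS: "finite S" using assms(2) card.infinite by fastforce
  have sub: "S \<subseteq> V" and ed: "\<And>x y. x \<in> S \<Longrightarrow> y \<in> S \<Longrightarrow> x \<noteq> y \<Longrightarrow> {x,y} \<in> E"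
    using assms(1) unfolding clq_def by auto
  consider "card S = 2" | "card S = 3" | "4 \<le> card S" using assms(2) by linarith
  thus ?thesis
  proof cases
    case 1 then obtain x y where "S = {x,y}" "x \<noteq> y" by (auto simp: card_2_iff)
    thus ?thesis using ed by auto
  next
    case 2 then obtain x y z where "S = {x,y,z}" "x \<noteq> y" "y \<noteq> z" "x \<noteq> z" by (auto simp: card_3_iff)
    thus ?thesis using ed triI by auto
  next
    case 3
    then obtain T where T: "T \<subseteq> S" "card T = 4" using obtain_subset_with_card_n by metis
    hence "T \<noteq> {}" by auto
    then obtain a where a: "a \<in> T" by auto
    have fT: "finite T" using T fS finite_subset by auto
    have "card (T - {a}) = 3" using T a fT by simp
    then obtain x y z where xyz: "T - {a} = {x,y,z}" "x \<noteq> y" "y \<noteq> z" "x \<noteq> z" by (auto simp: card_3_iff)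
    have in1: "x \<in> S" "y \<in> S" "z \<in> S" "a \<in> S" using xyz T a by auto
    have ne: "a \<noteq> x" "a \<noteq> y" "a \<noteq> z" using xyz by auto
    show ?thesis using noK4[of a x y z] ed in1 ne xyz by auto
  qed
qed

end

locale PD = G +
  fixes W :: "('a + nat) set" and A :: "(('a + nat) \<times> ('a + nat)) set"
  assumes pd: "phylogeny_digraph V E W A"
begin

lemma finW: "finite W" and IW: "Inl ` V \<subseteq> W" and AW: "A \<subseteq> W \<times> W" and acy: "acyclic A"
  and noin: "\<And>x y. (x, y) \<in> A \<Longrightarrow> x \<notin> Inl ` V \<Longrightarrow> y \<notin> Inl ` V"
  and adj: "\<And>u v. u \<in> V \<Longrightarrow> v \<in> V \<Longrightarrow> u \<noteq> v \<Longrightarrow> ({u, v} \<in> E \<longleftrightarrow> phylo_adj A (Inl u) (Inl v))"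
  using pd unfolding phylogeny_digraph_def by auto

definition "S w = {v \<in> V. (Inl v, w) \<in> A \<or> w = Inl v}"
definition "W2 = {w \<in> W. 2 \<le> card (S w)}"
definition "F = S ` W2"
definition "Tp = {v \<in> V. 2 \<le> card (S (Inl v))}"
definition "F' = F \<inter> (Tri \<union> TE)"

lemma S_sub: "S w \<subseteq> V" unfolding S_def by auto
lemma finS: "finite (S w)" by (rule finite_subset[OF S_sub finV])

lemma S_clq: "clq (S w)"
  unfolding clq_def
proof (intro conjI S_sub ballI impI)
  fix x y assume xy: "x \<in> S w" "y \<in> S w" "x \<noteq> y"
  hence V: "x \<in> V" "y \<in> V" unfolding S_def by auto
  have "phylo_adj A (Inl x) (Inl y)"
  proof (cases "w = Inl x")
    case True
    hence "(Inl y, Inl x) \<in> A" using xy unfolding S_def by auto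
    thus ?thesis unfolding phylo_adj_def using xy by auto
  next
    case False
    hence x: "(Inl x, w) \<in> A" using xy unfolding S_def by auto
    show ?thesis
    proof (cases "w = Inl y")
      case True thus ?thesis using x xy unfolding phylo_adj_def by auto
    next
      case False
      hence "(Inl y, w) \<in> A" using xy unfolding S_def by auto
      thus ?thesis using x xy unfolding phylo_adj_def by auto
    qed
  qed
  thus "{x,y} \<in> E" using adj V xy by auto
qed

lemma finW2: "finite W2" using finW unfolding W2_def by auto
lemma finF: "finite F" using finW2 unfolding F_def by auto

lemma F_class: "X \<in> F \<Longrightarrow> X \<in> E \<or> X \<in> Tri"
  unfolding F_def W2_def using clq_class S_clq by auto

lemma cover: assumes "e \<in> E" shows "\<exists>w\<in>W2. e \<subseteq> S w"
proof -
  obtain u v where uv: "e = {u,v}" "u \<noteq> v" "u \<in> V" "v \<in> V" using assms by (rule edgeE)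
  have pa: "phylo_adj A (Inl u) (Inl v)" using adj uv assms by auto
  have "\<exists>w\<in>W. e \<subseteq> S w"
  proof -
    consider "(Inl u, Inl v) \<in> A" | "(Inl v, Inl u) \<in> A" | "\<exists>w. (Inl u, w) \<in> A \<and> (Inl v, w) \<in> A"
      using pa unfolding phylo_adj_def by auto
    thus ?thesis
    proof cases
      case 1 hence "e \<subseteq> S (Inl v)" using uv unfolding S_def by auto
      thus ?thesis using IW uv by auto
    next
      case 2 hence "e \<subseteq> S (Inl u)" using uv unfolding S_def by auto
      thus ?thesis using IW uv by auto
    next
      case 3 then obtain w where w: "(Inl u, w) \<in> A" "(Inl v, w) \<in> A" by auto
      hence "e \<subseteq> S w" using uv unfolding S_def by auto
      moreover have "w \<in> W" using w AW by auto
      ultimately show ?thesis by auto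
    qed
  qed
  then obtain w where w: "w \<in> W" "e \<subseteq> S w" by auto
  have "card e \<le> card (S w)" using w finS card_mono by auto
  hence "2 \<le> card (S w)" using card_edge assms by auto
  thus ?thesis using w unfolding W2_def by auto
qed

lemma NTE_F: "NTE \<subseteq> F - F'"
proof
  fix e assume e: "e \<in> NTE"
  hence eE: "e \<in> E" and eT: "e \<notin> TE" unfolding minus_edges_def by auto
  obtain w where w: "w \<in> W2" "e \<subseteq> S w" using cover eE by auto
  have SF: "S w \<in> F" using w unfolding F_def by auto
  have "S w \<notin> Tri"
  proof
    assume "S w \<in> Tri" thus False using eT eE w unfolding triangle_edges_def by auto
  qed
  hence "S w \<in> E" using F_class SF by auto
  hence "e = S w" using card_subset_eq[OF finS w(2)] card_edge eE by auto
  hence "e \<in> F" using SF by simp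
  moreover have "e \<notin> Tri" using card_edge[OF eE] card_tri by force
  ultimately show "e \<in> F - F'" using eT unfolding F'_def by auto
qed

lemma priv_F: assumes "T \<in> Tri" "T \<notin> F" "e \<in> E" "e \<subseteq> T" "\<not> shared e T" shows "e \<in> F"
proof -
  obtain w where w: "w \<in> W2" "e \<subseteq> S w" using cover assms(3) by auto
  have SF: "S w \<in> F" using w unfolding F_def by auto
  have "S w \<notin> Tri"
  proof
    assume "S w \<in> Tri"
    hence "S w = T" using assms(5) w unfolding shared_def by auto
    thus False using SF assms(2) by simp
  qed
  hence "S w \<in> E" using F_class SF by auto
  hence "e = S w" using card_subset_eq[OF finS w(2)] card_edge assms(3) by auto
  thus ?thesis using SF by simp
qed

lemma cardF_lower: "card NTE + card Tri \<le> card F"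
proof -
  define pv where "pv T = (SOME e. e \<in> E \<and> e \<subseteq> T \<and> \<not> shared e T)" for T
  have pv: "T \<in> Tri \<Longrightarrow> pv T \<in> E \<and> pv T \<subseteq> T \<and> \<not> shared (pv T) T" for T
  proof -
    assume "T \<in> Tri"
    then obtain e where "e \<in> E" "e \<subseteq> T" "\<not> shared e T" by (rule priv)
    hence "\<exists>e. e \<in> E \<and> e \<subseteq> T \<and> \<not> shared e T" by blast
    thus ?thesis unfolding pv_def by (rule someI_ex)
  qed
  define g where "g T = (if T \<in> F then T else pv T)" for T
  have gF: "g ` Tri \<subseteq> F"
  proof
    fix X assume "X \<in> g ` Tri"
    then obtain T where T: "T \<in> Tri" "X = g T" by auto
    show "X \<in> F"
    proof (cases "T \<in> F")
      case True thus ?thesis using T unfolding g_def by simp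
    next
      case False thus ?thesis using T priv_F[OF T(1) False] pv[OF T(1)] unfolding g_def by auto
    qed
  qed
  have inj: "inj_on g Tri"
  proof (rule inj_onI)
    fix T1 T2 assume T: "T1 \<in> Tri" "T2 \<in> Tri" "g T1 = g T2"
    have c1: "card T1 = 3" "card T2 = 3" using T card_tri by auto
    have cp1: "card (pv T1) = 2" "card (pv T2) = 2" using pv T card_edge by auto
    show "T1 = T2"
    proof (cases "T1 \<in> F")
      case True note t1 = True
      show ?thesis
      proof (cases "T2 \<in> F")
        case True thus ?thesis using T t1 unfolding g_def by simp
      next
        case False hence "T1 = pv T2" using T t1 unfolding g_def by simp
        thus ?thesis using c1 cp1 by simp
      qed
    next
      case False note t1 = False
      show ?thesis
      proof (cases "T2 \<in> F")
        case True hence "T2 = pv T1" using T t1 unfolding g_def by simp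
        thus ?thesis using c1 cp1 by simp
      next
        case False hence eq: "pv T1 = pv T2" using T t1 unfolding g_def by simp
        have "pv T1 \<subseteq> T2" using eq pv[OF T(2)] by simp
        thus ?thesis using pv[OF T(1)] T(2) unfolding shared_def by auto
      qed
    qed
  qed
  have disj: "NTE \<inter> g ` Tri = {}"
  proof -
    have "X \<notin> NTE" if Xin: "X \<in> g ` Tri" for X
    proof -
      obtain T where T: "T \<in> Tri" "X = g T" using Xin by auto
      show ?thesis
      proof (cases "T \<in> F")
        case True
        hence "X = T" using T unfolding g_def by simp
        hence "card X = 3" using card_tri T by simp
        thus ?thesis using card_edge unfolding minus_edges_def by force
      next
        case False
        hence "X = pv T" using T unfolding g_def by simp
        hence "X \<in> TE" using pv[OF T(1)] T(1) unfolding triangle_edges_def by auto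
        thus ?thesis unfolding minus_edges_def by auto
      qed
    qed
    thus ?thesis by auto
  qed
  have "card NTE + card Tri = card (NTE \<union> g ` Tri)"
    using card_Un_disjoint[OF _ _ disj] card_image[OF inj] finE finTri
    unfolding minus_edges_def by auto
  also have "\<dots> \<le> card F"
    using NTE_F gF finF by (intro card_mono) auto
  finally show ?thesis .
qed

lemma cardF_upper: "card F \<le> card (W - Inl ` V) + card Tp"
proof -
  have "card F \<le> card W2" unfolding F_def using finW2 card_image_le by auto
  also have "W2 = (W2 - Inl ` V) \<union> Inl ` Tp"
    unfolding W2_def Tp_def using IW by auto
  also have "card \<dots> \<le> card (W2 - Inl ` V) + card (Inl ` Tp :: ('a + nat) set)" by (rule card_Un_le)
  also have "card (W2 - Inl ` V) \<le> card (W - Inl ` V)"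
    using finW unfolding W2_def by (intro card_mono) auto
  also have "card (Inl ` Tp :: ('a + nat) set) = card Tp" by (simp add: card_image)
  finally show ?thesis by simp
qed

definition "Rv = {(u,v). (Inl u, Inl v) \<in> A}"

lemma wfA: "wf A"
proof -
  have "finite (W \<times> W)" using finW by auto
  hence "finite A" using AW finite_subset by auto
  thus ?thesis using acy finite_acyclic_wf by auto
qed

lemma wfRv: "wf Rv"
proof -
  have "Rv = inv_image A Inl" unfolding Rv_def inv_image_def by auto
  thus ?thesis using wfA by simp
qed

lemma Tp_le: assumes "V \<noteq> {}" shows "card Tp + 1 \<le> card V"
proof -
  obtain v0 where "v0 \<in> V" using assms by auto
  then obtain z where z: "z \<in> V" "\<And>y. (y, z) \<in> Rv \<Longrightarrow> y \<notin> V" using wfE_min[OF wfRv] by metis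
  have "S (Inl z) = {z}" using z unfolding S_def Rv_def by auto
  hence "z \<notin> Tp" unfolding Tp_def by auto
  hence "Tp \<subseteq> V - {z}" unfolding Tp_def by auto
  hence "card Tp \<le> card (V - {z})" using finV by (intro card_mono) auto
  moreover have "card (V - {z}) = card V - 1" using z(1) finV by simp
  moreover have "card V > 0" using z(1) finV card_gt_0_iff by auto
  ultimately show ?thesis by linarith
qed

theorem lower1: assumes "V \<noteq> {}" shows "card NTE + card Tri + 1 \<le> card (W - Inl ` V) + card V"
  using cardF_lower cardF_upper Tp_le[OF assms] by linarith

end



context PD begin

definition "Rm = {(u,v). (Inl u, Inl v) \<in> A \<and> {u,v} \<in> NTE}"
definition "cmp v = {u \<in> V. (v,u) \<in> (edge_rel NTE)\<^sup>*}"
definition "Mins = {v \<in> V. \<forall>u. (u,v) \<notin> Rm}"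
definition "Tp1 = {v \<in> Tp. S (Inl v) \<in> F'}"

lemma NTE_E: "NTE \<subseteq> E" unfolding minus_edges_def by auto

lemma symR: "sym (edge_rel NTE)"
  unfolding sym_def edge_rel_def by (auto simp: insert_commute)

lemma cmp_eq: assumes "z \<in> cmp v" shows "cmp z = cmp v"
proof -
  have vz: "(v,z) \<in> (edge_rel NTE)\<^sup>*" using assms unfolding cmp_def by auto
  have zv: "(z,v) \<in> (edge_rel NTE)\<^sup>*" using symD[OF sym_rtrancl[OF symR] vz] .
  show ?thesis unfolding cmp_def
    using rtrancl_trans[OF vz] rtrancl_trans[OF zv] by blast
qed

lemma wfRm: "wf Rm"
  by (rule wf_subset[OF wfRv]) (auto simp: Rm_def Rv_def)

lemma cmp_min: assumes "v \<in> V" shows "\<exists>z. z \<in> cmp v \<and> z \<in> Mins"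
proof -
  have "v \<in> cmp v" using assms unfolding cmp_def by auto
  then obtain z where z: "z \<in> cmp v" "\<And>y. (y, z) \<in> Rm \<Longrightarrow> y \<notin> cmp v"
    using wfE_min[OF wfRm] by metis
  have "z \<in> Mins"
  proof -
    have zV: "z \<in> V" using z unfolding cmp_def by auto
    have "(u,z) \<notin> Rm" for u
    proof
      assume uz: "(u,z) \<in> Rm"
      hence e: "{u,z} \<in> NTE" unfolding Rm_def by auto
      hence eE: "{u,z} \<in> E" using NTE_E by auto
      hence "u \<noteq> z" "u \<in> V" using edge_ne edge_V by auto
      hence "(z,u) \<in> edge_rel NTE" using e unfolding edge_rel_def by (auto simp: insert_commute)
      hence "(v,u) \<in> (edge_rel NTE)\<^sup>*" using z(1) unfolding cmp_def by auto
      hence "u \<in> cmp v" using \<open>u \<in> V\<close> unfolding cmp_def by auto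
      thus False using z(2)[OF uz] by simp
    qed
    thus ?thesis using zV unfolding Mins_def by auto
  qed
  thus ?thesis using z by auto
qed

lemma comps_le: "num_components V NTE \<le> card Mins"
proof -
  have nc: "num_components V NTE = card (cmp ` V)" unfolding num_components_def cmp_def by simp
  define pk where "pk K = (SOME z. z \<in> K \<and> z \<in> Mins)" for K
  have pk: "K \<in> cmp ` V \<Longrightarrow> pk K \<in> K \<and> pk K \<in> Mins" for K
  proof -
    assume "K \<in> cmp ` V"
    then obtain v where "v \<in> V" "K = cmp v" by auto
    hence "\<exists>z. z \<in> K \<and> z \<in> Mins" using cmp_min by auto
    thus ?thesis unfolding pk_def by (rule someI_ex)
  qed
  have "inj_on pk (cmp ` V)"
  proof (rule inj_onI)
    fix K1 K2 assume K: "K1 \<in> cmp ` V" "K2 \<in> cmp ` V" "pk K1 = pk K2"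
    obtain v1 where v1: "K1 = cmp v1" using K by auto
    obtain v2 where v2: "K2 = cmp v2" using K by auto
    have "pk K1 \<in> cmp v1" "pk K1 \<in> cmp v2" using pk K v1 v2 by metis+
    thus "K1 = K2" using cmp_eq v1 v2 by metis
  qed
  moreover have "pk ` (cmp ` V) \<subseteq> Mins" using pk by auto
  moreover have "finite Mins" using finV unfolding Mins_def by auto
  ultimately show ?thesis using nc card_inj_on_le by metis
qed

lemma inj_STp: "inj_on (\<lambda>v. S (Inl v)) Tp"
proof (rule inj_onI)
  fix v v' assume vv: "v \<in> Tp" "v' \<in> Tp" "S (Inl v) = S (Inl v')"
  show "v = v'"
  proof (rule ccontr)
    assume ne: "v \<noteq> v'"
    have "v \<in> S (Inl v)" "v' \<in> S (Inl v')" using vv unfolding Tp_def S_def by auto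
    hence "v \<in> S (Inl v')" "v' \<in> S (Inl v)" using vv by auto
    hence "(Inl v, Inl v') \<in> A" "(Inl v', Inl v) \<in> A" using ne unfolding S_def by auto
    hence "(Inl v, Inl v) \<in> A\<^sup>+" by auto
    thus False using acy unfolding acyclic_def by auto
  qed
qed

lemma Tp1_le: "card Tp1 \<le> card F'"
proof -
  have "inj_on (\<lambda>v. S (Inl v)) Tp1" using inj_STp unfolding Tp1_def by (rule inj_on_subset) auto
  moreover have "(\<lambda>v. S (Inl v)) ` Tp1 \<subseteq> F'" unfolding Tp1_def by auto
  moreover have "finite F'" using finF unfolding F'_def by auto
  ultimately show ?thesis using card_inj_on_le by metis
qed

lemma Tp2_sub: "Tp - Tp1 \<subseteq> V - Mins"
proof
  fix v assume v: "v \<in> Tp - Tp1"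
  hence vV: "v \<in> V" and c2: "2 \<le> card (S (Inl v))" and nF': "S (Inl v) \<notin> F'"
    unfolding Tp_def Tp1_def by auto
  have "Inl v \<in> W2" using vV c2 IW unfolding W2_def by auto
  hence SF: "S (Inl v) \<in> F" unfolding F_def by auto
  hence nT: "S (Inl v) \<notin> Tri" "S (Inl v) \<notin> TE" using nF' unfolding F'_def by auto
  hence SE: "S (Inl v) \<in> E" using F_class SF by auto
  then obtain p q where pq: "S (Inl v) = {p,q}" "p \<noteq> q" by (rule edgeE)
  have vin: "v \<in> S (Inl v)" using vV unfolding S_def by auto
  obtain u where u: "S (Inl v) = {u,v}" "u \<noteq> v" using pq vin by auto
  have "u \<in> S (Inl v)" using u by auto
  hence "(Inl u, Inl v) \<in> A" using u(2) unfolding S_def by auto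
  moreover have "{u,v} \<in> NTE" using SE nT u unfolding minus_edges_def by auto
  ultimately have "(u,v) \<in> Rm" unfolding Rm_def by auto
  thus "v \<in> V - Mins" using vV unfolding Mins_def by auto
qed

theorem lower2: "card NTE + num_components V NTE \<le> card (W - Inl ` V) + card V"
proof -
  have fTp: "finite Tp" using finV unfolding Tp_def by auto
  have s1: "Tp1 \<subseteq> Tp" unfolding Tp1_def by auto
  have "card Tp = card Tp1 + card (Tp - Tp1)"
    using card_Diff_subset[OF finite_subset[OF s1 fTp] s1] card_mono[OF fTp s1] by linarith
  moreover have "card (Tp - Tp1) + card Mins \<le> card V"
  proof -
    have "card (Tp - Tp1) \<le> card (V - Mins)" using Tp2_sub finV by (intro card_mono) auto
    moreover have "card (V - Mins) + card Mins = card V"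
    proof -
      have s2: "Mins \<subseteq> V" unfolding Mins_def by auto
      show ?thesis using card_Diff_subset[OF finite_subset[OF s2 finV] s2] card_mono[OF finV s2] by linarith
    qed
    ultimately show ?thesis by linarith
  qed
  moreover have "card F = card F' + card (F - F')"
  proof -
    have s3: "F' \<subseteq> F" unfolding F'_def by auto
    show ?thesis using card_Diff_subset[OF finite_subset[OF s3 finF] s3] card_mono[OF finF s3] by linarith
  qed
  moreover have "card NTE \<le> card (F - F')" using NTE_F finF by (intro card_mono) auto
  ultimately show ?thesis using cardF_upper Tp1_le comps_le by linarith
qed

end



lemma acyclic_by_measure:
  fixes f :: "'b \<Rightarrow> nat"
  assumes "\<And>x y. (x,y) \<in> R \<Longrightarrow> f x < f y" shows "acyclic R"
proof -
  have "R \<subseteq> inv_image less_than f" using assms by auto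
  hence "wf R" using wf_subset by blast
  thus ?thesis by (rule wf_acyclic)
qed

context G begin

lemma construct:
  fixes r :: "'a \<Rightarrow> nat"
  assumes C: "\<And>v. v \<in> V \<Longrightarrow> v \<in> C v \<and> clq (C v) \<and> (\<forall>u\<in>C v. u \<noteq> v \<longrightarrow> r u < r v)"
    and finQ: "finite Q" and Qc: "\<And>q. q \<in> Q \<Longrightarrow> clq q"
    and cov: "\<And>e. e \<in> E \<Longrightarrow> (\<exists>v\<in>V. e \<subseteq> C v) \<or> (\<exists>q\<in>Q. e \<subseteq> q)"
  shows "\<exists>W A. phylogeny_digraph V E W A \<and> card (W - Inl ` V) = card Q"
proof -
  obtain xs where xs: "set xs = Q" "distinct xs" using finite_distinct_list[OF finQ] by auto
  define k where "k = length xs"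
  have kQ: "card Q = k" unfolding k_def using xs distinct_card by metis
  define W :: "('a + nat) set" where "W = Inl ` V \<union> Inr ` {..<k}"
  define A :: "(('a + nat) \<times> ('a + nat)) set" where
    "A = {(Inl u, Inl v) | u v. v \<in> V \<and> u \<in> C v \<and> u \<noteq> v} \<union> {(Inl u, Inr i) | u i. i < k \<and> u \<in> xs ! i}"
  have xsQ: "i < k \<Longrightarrow> xs ! i \<in> Q" for i using xs unfolding k_def by auto
  have clqV: "clq X \<Longrightarrow> X \<subseteq> V" for X unfolding clq_def by auto
  have A1: "(Inl u, Inl v) \<in> A \<longleftrightarrow> v \<in> V \<and> u \<in> C v \<and> u \<noteq> v" for u v unfolding A_def by auto
  have A2: "(Inl u, Inr i) \<in> A \<longleftrightarrow> i < k \<and> u \<in> xs ! i" for u i unfolding A_def by auto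
  have A3: "(Inr i, y) \<notin> A" for i y unfolding A_def by auto
  have Asrc: "(x,y) \<in> A \<Longrightarrow> x \<in> Inl ` V" for x y
  proof -
    assume "(x,y) \<in> A"
    then consider v u where "v \<in> V" "u \<in> C v" "x = Inl u" | i u where "i < k" "u \<in> xs ! i" "x = Inl u"
      unfolding A_def by auto
    thus ?thesis
    proof cases
      case 1
      hence "u \<in> V" using C[OF 1(1)] clqV by blast
      thus ?thesis using 1 by simp
    next
      case 2
      hence "u \<in> V" using xsQ[OF 2(1)] Qc clqV by blast
      thus ?thesis using 2 by simp
    qed
  qed
  have pd: "phylogeny_digraph V E W A"
    unfolding phylogeny_digraph_def
  proof (intro conjI allI impI ballI)
    show "finite W" unfolding W_def using finV by auto
    show "Inl ` V \<subseteq> W" unfolding W_def by auto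
    show "A \<subseteq> W \<times> W"
    proof
      fix p assume p: "p \<in> A"
      then obtain x y where xy: "p = (x,y)" by (cases p)
      have "x \<in> W" using Asrc p xy unfolding W_def by auto
      moreover have "y \<in> W"
      proof (cases y)
        case (Inl v) thus ?thesis using p xy A1 unfolding W_def
          by (metis Asrc Un_iff image_eqI imageE sum.inject(1))
      next
        case (Inr i) thus ?thesis using p xy Asrc A2 unfolding W_def by fastforce
      qed
      ultimately show "p \<in> W \<times> W" using xy by auto
    qed
    show "acyclic A"
    proof (rule acyclic_by_measure[where f = "case_sum r (\<lambda>_. Suc (Max (r ` V)))"])
      fix x y assume xy: "(x,y) \<in> A"
      then obtain u where u: "x = Inl u" "u \<in> V" using Asrc by auto
      show "case_sum r (\<lambda>_. Suc (Max (r ` V))) x < case_sum r (\<lambda>_. Suc (Max (r ` V))) y"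
      proof (cases y)
        case (Inl v) thus ?thesis using xy u A1 C by auto
      next
        case (Inr i)
        have "r u \<le> Max (r ` V)" using u finV by auto
        thus ?thesis using u Inr by auto
      qed
    qed
    fix x y assume "(x,y) \<in> A" "x \<notin> Inl ` V"
    thus "y \<notin> Inl ` V" using Asrc by auto
  next
    fix u v assume uv: "u \<in> V" "v \<in> V" "u \<noteq> v"
    show "{u, v} \<in> E \<longleftrightarrow> phylo_adj A (Inl u) (Inl v)"
    proof
      assume e: "{u,v} \<in> E"
      show "phylo_adj A (Inl u) (Inl v)" unfolding phylo_adj_def
      proof (intro conjI)
        show "Inl u \<noteq> Inl v" using uv by simp
        from cov[OF e] show "(Inl u, Inl v) \<in> A \<or> (Inl v, Inl u) \<in> A \<or> (\<exists>w. (Inl u, w) \<in> A \<and> (Inl v, w) \<in> A)"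
        proof
          assume "\<exists>x\<in>V. {u, v} \<subseteq> C x"
          then obtain x where x: "x \<in> V" "{u,v} \<subseteq> C x" by auto
          show ?thesis
          proof (cases "x = v")
            case True thus ?thesis using A1 x uv by auto
          next
            case False note xv = False
            show ?thesis
            proof (cases "x = u")
              case True thus ?thesis using A1 x uv by auto
            next
              case False thus ?thesis using A1 x uv xv by blast
            qed
          qed
        next
          assume "\<exists>q\<in>Q. {u, v} \<subseteq> q"
          then obtain q where q: "q \<in> Q" "{u,v} \<subseteq> q" by auto
          then obtain i where i: "i < k" "xs ! i = q" using xs unfolding k_def by (metis in_set_conv_nth)
          thus ?thesis using A2 q by blast
        qed
      qed
    next
      assume pa: "phylo_adj A (Inl u) (Inl v)"
      consider "(Inl u, Inl v) \<in> A" | "(Inl v, Inl u) \<in> A" | "\<exists>w. (Inl u, w) \<in> A \<and> (Inl v, w) \<in> A"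
        using pa unfolding phylo_adj_def by auto
      thus "{u,v} \<in> E"
      proof cases
        case 1 hence "u \<in> C v" using A1 by auto
        thus ?thesis using C[OF uv(2)] uv unfolding clq_def by auto
      next
        case 2 hence "v \<in> C u" using A1 by auto
        hence "{v,u} \<in> E" using C[OF uv(1)] uv unfolding clq_def by auto
        thus ?thesis by (simp add: insert_commute)
      next
        case 3 then obtain w where w: "(Inl u, w) \<in> A" "(Inl v, w) \<in> A" by auto
        show ?thesis
        proof (cases w)
          case (Inl x)
          hence "x \<in> V" "u \<in> C x" "v \<in> C x" using w A1 by auto
          thus ?thesis using C uv unfolding clq_def by auto
        next
          case (Inr i)
          hence "i < k" "u \<in> xs ! i" "v \<in> xs ! i" using w A2 by auto
          thus ?thesis using xsQ Qc uv unfolding clq_def by blast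
        qed
      qed
    qed
  qed
  have "W - Inl ` V = Inr ` {..<k}" unfolding W_def by auto
  hence "card (W - Inl ` V) = k" by (simp add: card_image)
  thus ?thesis using pd kQ by auto
qed

lemma pn_le: assumes "phylogeny_digraph V E W A" shows "phylogeny_number V E \<le> card (W - Inl ` V)"
  unfolding phylogeny_number_def using assms by (intro Least_le) auto

end



context G begin

lemma clq_tri: "T \<in> Tri \<Longrightarrow> clq T" unfolding clq_def using tri_sub tri_edge by auto
lemma clq_edge: assumes "e \<in> E" shows "clq e"
proof -
  obtain a b where ab: "e = {a,b}" "a \<noteq> b" "a \<in> V" "b \<in> V" using assms by (rule edgeE)
  show ?thesis unfolding clq_def
  proof (intro conjI ballI impI)
    show "e \<subseteq> V" using ab by auto
    fix x y assume "x \<in> e" "y \<in> e" "x \<noteq> y"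
    hence "{x,y} = e" using ab by auto
    thus "{x,y} \<in> E" using assms by simp
  qed
qed
lemma clq_single: "v \<in> V \<Longrightarrow> clq {v}" unfolding clq_def by auto

definition "CT r v = {T \<in> Tri. v \<in> T \<and> (\<forall>u\<in>T. u \<noteq> v \<longrightarrow> (r::'a\<Rightarrow>nat) u < r v)}"
definition "CN r v = {e \<in> NTE. v \<in> e \<and> (\<forall>u\<in>e. u \<noteq> v \<longrightarrow> (r::'a\<Rightarrow>nat) u < r v)}"
definition "Xs r root = {v \<in> V. v \<noteq> root \<and> CT r v = {} \<and> CN r v = {}}"

lemma NTE_E': "NTE \<subseteq> E" unfolding minus_edges_def by auto

lemma upperU:
  fixes r :: "'a \<Rightarrow> nat"
  assumes root: "root \<in> V"
  shows "\<exists>W A. phylogeny_digraph V E W A \<and>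
     card (W - Inl ` V) + card V = card Tri + card NTE + card (Xs r root) + 1"
proof -
  define Cf where "Cf v = (if CT r v \<noteq> {} then (SOME T. T \<in> CT r v)
      else if CN r v \<noteq> {} then (SOME e. e \<in> CN r v) else {v})" for v
  have CfT: "CT r v \<noteq> {} \<Longrightarrow> Cf v \<in> CT r v" for v
    unfolding Cf_def by (simp add: some_in_eq)
  have CfN: "CT r v = {} \<Longrightarrow> CN r v \<noteq> {} \<Longrightarrow> Cf v \<in> CN r v" for v
    unfolding Cf_def by (simp add: some_in_eq)
  have Cf0: "CT r v = {} \<Longrightarrow> CN r v = {} \<Longrightarrow> Cf v = {v}" for v
    unfolding Cf_def by simp
  have Cv: "v \<in> Cf v \<and> clq (Cf v) \<and> (\<forall>u\<in>Cf v. u \<noteq> v \<longrightarrow> r u < r v)" if vV: "v \<in> V" for v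
  proof (cases "CT r v \<noteq> {}")
    case True thus ?thesis using CfT[OF True] clq_tri unfolding CT_def by auto
  next
    case False note f = False
    show ?thesis
    proof (cases "CN r v \<noteq> {}")
      case True thus ?thesis using CfN[OF _ True] f clq_edge NTE_E' unfolding CN_def by auto
    next
      case False thus ?thesis using Cf0 f clq_single vV by auto
    qed
  qed
  define Vf where "Vf = V - Xs r root - {root}"
  have VfV: "Vf \<subseteq> V" unfolding Vf_def by auto
  have CfVf: "Cf ` Vf \<subseteq> Tri \<union> NTE"
  proof
    fix X assume "X \<in> Cf ` Vf"
    then obtain v where v: "v \<in> Vf" "X = Cf v" by auto
    hence "CT r v \<noteq> {} \<or> CN r v \<noteq> {}" unfolding Vf_def Xs_def by auto
    thus "X \<in> Tri \<union> NTE" using CfT CfN v unfolding CT_def CN_def by blast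
  qed
  have injC: "inj_on Cf V"
  proof (rule inj_onI)
    fix v w assume vw: "v \<in> V" "w \<in> V" "Cf v = Cf w"
    show "v = w"
    proof (rule ccontr)
      assume ne: "v \<noteq> w"
      have "w \<in> Cf v" using Cv[OF vw(2)] vw(3) by simp
      hence "r w < r v" using Cv[OF vw(1)] ne by auto
      moreover have "v \<in> Cf w" using Cv[OF vw(1)] vw(3) by simp
      hence "r v < r w" using Cv[OF vw(2)] ne by auto
      ultimately show False by simp
    qed
  qed
  define Q where "Q = (Tri \<union> NTE) - Cf ` Vf"
  have finTN: "finite (Tri \<union> NTE)" using finTri finE NTE_E' finite_subset by auto
  have finQ: "finite Q" unfolding Q_def using finTN by auto
  have Qc: "q \<in> Q \<Longrightarrow> clq q" for q unfolding Q_def using clq_tri clq_edge NTE_E' by auto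
  have cov: "(\<exists>v\<in>V. e \<subseteq> Cf v) \<or> (\<exists>q\<in>Q. e \<subseteq> q)" if eE: "e \<in> E" for e
  proof -
    obtain B where B: "B \<in> Tri \<union> NTE" "e \<subseteq> B"
    proof (cases "e \<in> NTE")
      case True thus ?thesis using that[of e] by auto
    next
      case False
      hence "e \<in> TE" using eE unfolding minus_edges_def by auto
      then obtain T where "T \<in> Tri" "e \<subseteq> T" unfolding triangle_edges_def by auto
      thus ?thesis using that[of T] by auto
    qed
    show ?thesis
    proof (cases "B \<in> Cf ` Vf")
      case True
      then obtain v where "v \<in> Vf" "B = Cf v" by auto
      thus ?thesis using B VfV by auto
    next
      case False thus ?thesis using B unfolding Q_def by auto
    qed
  qed
  obtain W A where WA: "phylogeny_digraph V E W A" "card (W - Inl ` V) = card Q"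
    using construct[OF Cv finQ Qc cov] by blast
  have disj: "Tri \<inter> NTE = {}" using card_tri card_edge NTE_E' by fastforce
  have cTN: "card (Tri \<union> NTE) = card Tri + card NTE"
    using card_Un_disjoint[OF finTri _ disj] finTN by auto
  have cCf: "card (Cf ` Vf) = card Vf" using card_image inj_on_subset[OF injC VfV] by auto
  have cQ: "card Q + card Vf = card Tri + card NTE"
    using card_Diff_subset[OF finite_subset[OF CfVf finTN] CfVf] card_mono[OF finTN CfVf] cTN cCf
    unfolding Q_def by linarith
  have XV: "Xs r root \<subseteq> V - {root}" unfolding Xs_def by auto
  have "V - {root} = Vf \<union> Xs r root" unfolding Vf_def using XV by auto
  moreover have "Vf \<inter> Xs r root = {}" unfolding Vf_def by auto
  moreover have "finite Vf" using finite_subset[OF VfV finV] .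
  moreover have "finite (Xs r root)" using finite_subset[OF XV] finV by auto
  ultimately have "card (V - {root}) = card Vf + card (Xs r root)" using card_Un_disjoint by metis
  moreover have "card (V - {root}) + 1 = card V" using root finV
    by (metis Suc_eq_plus1 card_Suc_Diff1)
  ultimately show ?thesis using WA cQ by (intro exI[of _ W] exI[of _ A]) auto
qed

end



lemma boundary:
  assumes "(a, z) \<in> R\<^sup>*" "a \<in> S" "z \<notin> S"
  shows "\<exists>x y. x \<in> S \<and> y \<notin> S \<and> (x,y) \<in> R"
  using assms by (induction rule: rtrancl_induct) auto

definition goodL :: "'a set \<Rightarrow> 'a set set \<Rightarrow> 'a \<Rightarrow> ('a set \<Rightarrow> 'a \<Rightarrow> bool) \<Rightarrow> 'a list \<Rightarrow> bool" where
  "goodL V E' root Pref L \<longleftrightarrow> distinct L \<and> set L \<subseteq> V \<and> L \<noteq> [] \<and> L ! 0 = root \<and>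
    (\<forall>i<length L. 0 < i \<longrightarrow> (\<exists>j<i. {L!j, L!i} \<in> E')) \<and>
    (\<forall>i<length L. \<forall>z\<in>V - set (take i L). Pref (set (take i L)) z \<longrightarrow> Pref (set (take i L)) (L!i))"

lemma goodL_ext:
  assumes g: "goodL V E' root Pref L" and x: "x \<in> V" "x \<notin> set L" and adjx: "\<exists>a\<in>set L. {a,x} \<in> E'"
    and gr: "\<forall>z\<in>V - set L. Pref (set L) z \<longrightarrow> Pref (set L) x"
  shows "goodL V E' root Pref (L @ [x])"
  unfolding goodL_def
proof (intro conjI allI impI ballI)
  show "distinct (L @ [x])" using g x unfolding goodL_def by auto
  show "set (L @ [x]) \<subseteq> V" using g x unfolding goodL_def by auto
  show "L @ [x] \<noteq> []" by simp
  show "(L @ [x]) ! 0 = root" using g unfolding goodL_def by (simp add: nth_append)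
next
  fix i assume i: "i < length (L @ [x])" "0 < i"
  show "\<exists>j<i. {(L @ [x]) ! j, (L @ [x]) ! i} \<in> E'"
  proof (cases "i < length L")
    case True
    then obtain j where "j < i" "{L!j, L!i} \<in> E'" using g i unfolding goodL_def by auto
    thus ?thesis using True by (intro exI[of _ j]) (auto simp: nth_append)
  next
    case False
    hence il: "i = length L" using i by auto
    obtain a where a: "a \<in> set L" "{a,x} \<in> E'" using adjx by auto
    then obtain j where "j < length L" "L ! j = a" by (metis in_set_conv_nth)
    thus ?thesis using il a by (intro exI[of _ j]) (auto simp: nth_append)
  qed
next
  fix i z assume i: "i < length (L @ [x])" and z: "z \<in> V - set (take i (L @ [x]))"
    and p: "Pref (set (take i (L @ [x]))) z"
  show "Pref (set (take i (L @ [x]))) ((L @ [x]) ! i)"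
  proof (cases "i < length L")
    case True
    have "take i (L @ [x]) = take i L" using True by simp
    thus ?thesis using g True z p unfolding goodL_def by (auto simp: nth_append)
  next
    case False
    hence il: "i = length L" using i by auto
    have "take i (L @ [x]) = L" using il by simp
    thus ?thesis using gr z p il by (auto simp: nth_append)
  qed
qed

lemma goodL_exists:
  assumes finV: "finite V" and root: "root \<in> V" and EV: "E' \<subseteq> Pow V"
    and conn: "\<forall>v\<in>V. (root, v) \<in> (edge_rel E')\<^sup>*"
    and prefadj: "\<And>S z. Pref S z \<Longrightarrow> \<exists>a\<in>S. {a,z} \<in> E'"
  shows "1 \<le> k \<Longrightarrow> k \<le> card V \<Longrightarrow> \<exists>L. goodL V E' root Pref L \<and> length L = k"
proof (induction k)
  case 0 thus ?case by simp
next
  case (Suc k)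
  show ?case
  proof (cases k)
    case 0
    have "goodL V E' root Pref [root]" unfolding goodL_def using root prefadj by auto
    thus ?thesis using 0 by auto
  next
    case (Suc k')
    then obtain L where L: "goodL V E' root Pref L" "length L = k" using Suc.IH Suc.prems by auto
    have sL: "set L \<subseteq> V" and dL: "distinct L" and hd: "L ! 0 = root" and ne: "L \<noteq> []"
      using L unfolding goodL_def by auto
    have "card (set L) = k" using dL L distinct_card by metis
    hence "set L \<noteq> V" using Suc.prems by auto
    then obtain z where z: "z \<in> V" "z \<notin> set L" using sL by auto
    have rL: "root \<in> set L" using hd ne by (metis length_greater_0_conv nth_mem)
    obtain x where x: "x \<in> V" "x \<notin> set L" "\<exists>a\<in>set L. {a,x} \<in> E'"
      "\<forall>z\<in>V - set L. Pref (set L) z \<longrightarrow> Pref (set L) x"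
    proof (cases "\<exists>z\<in>V - set L. Pref (set L) z")
      case True
      then obtain y where y: "y \<in> V - set L" "Pref (set L) y" by auto
      thus ?thesis using that[of y] prefadj by auto
    next
      case False
      obtain a b where ab: "a \<in> set L" "b \<notin> set L" "(a,b) \<in> edge_rel E'"
        using boundary[OF conn[rule_format, OF z(1)] rL z(2)] by auto
      hence e: "{a,b} \<in> E'" unfolding edge_rel_def by auto
      hence "b \<in> V" using EV by auto
      thus ?thesis using that[of b] ab e False by auto
    qed
    have "goodL V E' root Pref (L @ [x])" using goodL_ext[OF L(1) x] .
    thus ?thesis using L by auto
  qed
qed

lemma order_exists:
  fixes V :: "'a set" and E' :: "'a set set"
  assumes finV: "finite V" and root: "root \<in> V" and EV: "E' \<subseteq> Pow V"
    and conn: "\<forall>v\<in>V. (root, v) \<in> (edge_rel E')\<^sup>*"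
    and prefadj: "\<And>S z. Pref S z \<Longrightarrow> \<exists>a\<in>S. {a,z} \<in> E'"
  shows "\<exists>r::'a\<Rightarrow>nat. inj_on r V \<and> (\<forall>v\<in>V. v \<noteq> root \<longrightarrow> (\<exists>u\<in>V. r u < r v \<and> {u,v} \<in> E')) \<and>
     (\<forall>v\<in>V. \<forall>z\<in>V. r v \<le> r z \<longrightarrow> Pref {u\<in>V. r u < r v} z \<longrightarrow> Pref {u\<in>V. r u < r v} v)"
proof -
  have "card V \<noteq> 0" using root finV by auto
  hence "1 \<le> card V" by linarith
  hence "\<exists>L. goodL V E' root Pref L \<and> length L = card V"
    using goodL_exists[OF finV root EV conn prefadj, where k = "card V"] by simp
  then obtain L where L: "goodL V E' root Pref L" "length L = card V" by blast
  have dL: "distinct L" and sL: "set L \<subseteq> V" using L unfolding goodL_def by auto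
  have setL: "set L = V" using card_subset_eq[OF finV sL] distinct_card[OF dL] L(2) by auto
  define r where "r v = (SOME i. i < length L \<and> L ! i = v)" for v
  have rL: "i < length L \<Longrightarrow> r (L ! i) = i" for i
  proof -
    assume i: "i < length L"
    have "r (L ! i) < length L \<and> L ! (r (L ! i)) = L ! i"
      unfolding r_def by (rule someI[of _ i]) (use i in auto)
    thus ?thesis using nth_eq_iff_index_eq[OF dL] i by auto
  qed
  have Vi: "v \<in> V \<Longrightarrow> \<exists>i<length L. v = L ! i" for v using setL by (metis in_set_conv_nth)
  have bef: "{u\<in>V. r u < i} = set (take i L)" if i: "i < length L" for i
  proof (intro equalityI subsetI)
    fix u assume "u \<in> {u\<in>V. r u < i}"
    then obtain j where j: "j < length L" "u = L ! j" "r u < i" using Vi by auto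
    hence "j < i" using rL by auto
    thus "u \<in> set (take i L)" using j i by (auto simp: in_set_conv_nth intro!: exI[of _ j])
  next
    fix u assume "u \<in> set (take i L)"
    then obtain j where j: "j < i" "u = L ! j" using i by (auto simp: in_set_conv_nth)
    thus "u \<in> {u\<in>V. r u < i}" using rL i setL by auto
  qed
  show ?thesis
  proof (intro exI[of _ r] conjI ballI impI)
    show "inj_on r V"
    proof (rule inj_onI)
      fix u v assume "u \<in> V" "v \<in> V" "r u = r v"
      thus "u = v" using Vi rL by metis
    qed
  next
    fix v assume v: "v \<in> V" "v \<noteq> root"
    then obtain i where i: "i < length L" "v = L ! i" using Vi by auto
    have "i \<noteq> 0" using v i L unfolding goodL_def by auto
    then obtain j where j: "j < i" "{L!j, L!i} \<in> E'" using L i unfolding goodL_def by auto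
    thus "\<exists>u\<in>V. r u < r v \<and> {u, v} \<in> E'" using i rL setL
      by (intro bexI[of _ "L!j"]) auto
  next
    fix v z assume v: "v \<in> V" and z: "z \<in> V" and le: "r v \<le> r z" and p: "Pref {u \<in> V. r u < r v} z"
    obtain i where i: "i < length L" "v = L ! i" using Vi v by auto
    obtain j where j: "j < length L" "z = L ! j" using Vi z by auto
    have rv: "r v = i" using rL i by auto
    have "z \<notin> set (take i L)"
    proof
      assume "z \<in> set (take i L)"
      then obtain j' where "j' < i" "z = L ! j'" using i by (auto simp: in_set_conv_nth)
      hence "r z < i" using rL i by auto
      thus False using le rv by simp
    qed
    hence "z \<in> V - set (take i L)" using z by auto
    moreover have "Pref (set (take i L)) z" using p bef[OF i(1)] rv by simp
    ultimately have "Pref (set (take i L)) (L ! i)" using L i unfolding goodL_def by auto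
    thus "Pref {u \<in> V. r u < r v} v" using bef[OF i(1)] rv i by simp
  qed
qed




context G begin

lemma E_Pow: "E \<subseteq> Pow V" by (rule E_sub)

lemma upperC:
  assumes conn: "connected_graph V NTE"
  shows "\<exists>W A. phylogeny_digraph V E W A \<and> card (W - Inl ` V) + card V = card Tri + card NTE + 1"
proof -
  obtain root where root: "root \<in> V" using conn unfolding connected_graph_def by auto
  have cn: "\<forall>v\<in>V. (root, v) \<in> (edge_rel NTE)\<^sup>*" using conn root unfolding connected_graph_def by auto
  have EV: "NTE \<subseteq> Pow V" using E_sub NTE_E' by auto
  obtain r :: "'a \<Rightarrow> nat" where r: "\<forall>v\<in>V. v \<noteq> root \<longrightarrow> (\<exists>u\<in>V. r u < r v \<and> {u,v} \<in> NTE)"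
    using order_exists[OF finV root EV cn, where Pref = "\<lambda>_ _. False"] by auto
  have "Xs r root = {}"
  proof -
    have "CN r v \<noteq> {}" if v: "v \<in> V" "v \<noteq> root" for v
    proof -
      obtain u where u: "u \<in> V" "r u < r v" "{u,v} \<in> NTE" using r v by auto
      hence "{u,v} \<in> CN r v" unfolding CN_def by auto
      thus ?thesis by auto
    qed
    thus ?thesis unfolding Xs_def by auto
  qed
  thus ?thesis using upperU[OF root, of r] by auto
qed

lemma mid_unique:
  fixes r :: "'a \<Rightarrow> nat"
  assumes T: "T \<in> Tri" "v1 \<in> T" "v2 \<in> T" "r v1 < r v2"
    and lo: "\<exists>u\<in>T. r u < r v1" and up: "\<exists>w\<in>T. r v2 < r w"
  shows False
proof -
  have ne: "v1 \<noteq> v2" using T by auto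
  obtain s where s: "T = {v1,v2,s}" using tri_third[OF T(1-3) ne] by blast
  obtain u where u: "u \<in> T" "r u < r v1" using lo by auto
  obtain w where w: "w \<in> T" "r v2 < r w" using up by auto
  have "u = s" using u s T(4) by auto
  moreover have "w = s" using w s T(4) by auto
  ultimately show False using u w T(4) by simp
qed

definition "PrefT S z \<longleftrightarrow> (\<exists>a\<in>S. \<exists>b\<in>S. a \<noteq> b \<and> {a,b} \<in> E \<and> {a,z} \<in> E \<and> {b,z} \<in> E)"

lemma upperB:
  assumes conn: "connected_graph V E"
  shows "\<exists>W A. phylogeny_digraph V E W A \<and>
     card (W - Inl ` V) + card V + card (diamonds V E) \<le> 2 * card Tri + card NTE + 1"
proof -
  obtain root where root: "root \<in> V" using conn unfolding connected_graph_def by auto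
  have cn: "\<forall>v\<in>V. (root, v) \<in> (edge_rel E)\<^sup>*" using conn root unfolding connected_graph_def by auto
  have pa: "\<And>S z. PrefT S z \<Longrightarrow> \<exists>a\<in>S. {a,z} \<in> E" unfolding PrefT_def by auto
  obtain r :: "'a \<Rightarrow> nat" where rinj: "inj_on r V"
    and r: "\<forall>v\<in>V. v \<noteq> root \<longrightarrow> (\<exists>u\<in>V. r u < r v \<and> {u,v} \<in> E)"
    and gr: "\<forall>v\<in>V. \<forall>z\<in>V. r v \<le> r z \<longrightarrow> PrefT {u\<in>V. r u < r v} z \<longrightarrow> PrefT {u\<in>V. r u < r v} v"
    using order_exists[OF finV root E_sub cn, where Pref = PrefT, OF pa] by blast
  define X where "X = Xs r root"
  have XV: "X \<subseteq> V" unfolding X_def Xs_def by auto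
  have noPref: "\<not> PrefT {u\<in>V. r u < r v} v" if v: "v \<in> X" for v
  proof
    assume "PrefT {u\<in>V. r u < r v} v"
    then obtain a b where ab: "a \<in> V" "b \<in> V" "r a < r v" "r b < r v" "a \<noteq> b"
      "{a,b} \<in> E" "{a,v} \<in> E" "{b,v} \<in> E" unfolding PrefT_def by auto
    have "{a,b,v} \<in> Tri" using triI ab by auto
    hence "{a,b,v} \<in> CT r v" unfolding CT_def using ab by auto
    thus False using v unfolding X_def Xs_def by auto
  qed
  have midex: "\<exists>T. T \<in> Tri \<and> v \<in> T \<and> (\<exists>u\<in>T. r u < r v) \<and> (\<exists>w\<in>T. r v < r w)" if v: "v \<in> X" for v
  proof -
    have vV: "v \<in> V" "v \<noteq> root" and ct: "CT r v = {}" and cnn: "CN r v = {}"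
      using v unfolding X_def Xs_def by auto
    obtain u where u: "u \<in> V" "r u < r v" "{u,v} \<in> E" using r vV by auto
    have "{u,v} \<notin> NTE"
    proof
      assume "{u,v} \<in> NTE" hence "{u,v} \<in> CN r v" unfolding CN_def using u by auto
      thus False using cnn by auto
    qed
    hence "{u,v} \<in> TE" using u unfolding minus_edges_def by auto
    then obtain T where T: "T \<in> Tri" "{u,v} \<subseteq> T" unfolding triangle_edges_def by auto
    have uv: "u \<noteq> v" using u by auto
    obtain w where w: "T = {u,v,w}" "w \<noteq> u" "w \<noteq> v" using tri_third[OF T(1) _ _ uv] T by auto
    have wV: "w \<in> V" using tri_sub T w by auto
    have "\<not> r w < r v"
    proof
      assume "r w < r v"
      hence "T \<in> CT r v" unfolding CT_def using T w u by auto
      thus False using ct by auto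
    qed
    moreover have "r w \<noteq> r v" using rinj wV vV w inj_on_def by metis
    ultimately have "r v < r w" by linarith
    thus ?thesis using T w u by (intro exI[of _ T]) auto
  qed
  define mt where "mt v = (SOME T. T \<in> Tri \<and> v \<in> T \<and> (\<exists>u\<in>T. r u < r v) \<and> (\<exists>w\<in>T. r v < r w))" for v
  have mt: "v \<in> X \<Longrightarrow> mt v \<in> Tri \<and> v \<in> mt v \<and> (\<exists>u\<in>mt v. r u < r v) \<and> (\<exists>w\<in>mt v. r v < r w)" for v
    unfolding mt_def using midex by (rule someI_ex) 
  have injmt: "inj_on mt X"
  proof (rule inj_onI)
    fix v1 v2 assume v: "v1 \<in> X" "v2 \<in> X" "mt v1 = mt v2"
    show "v1 = v2"
    proof (rule ccontr)
      assume ne: "v1 \<noteq> v2"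
      hence "r v1 \<noteq> r v2" using rinj XV v inj_on_def by (metis subsetD)
      hence "r v1 < r v2 \<or> r v2 < r v1" by linarith
      thus False
      proof
        assume "r v1 < r v2"
        thus False using mid_unique[of "mt v1" v1 v2 r] mt[OF v(1)] mt[OF v(2)] v(3) by auto
      next
        assume "r v2 < r v1"
        thus False using mid_unique[of "mt v1" v2 v1 r] mt[OF v(1)] mt[OF v(2)] v(3) by auto
      qed
    qed
  qed
  have dstep: False if v: "v1 \<in> X" "v2 \<in> X" "r v1 < r v2" "a \<in> mt v1" "b \<in> mt v1"
      "a \<in> mt v2" "b \<in> mt v2" "a \<noteq> b" for v1 v2 a b
  proof -
    define T1 where "T1 = mt v1"
    define T2 where "T2 = mt v2"
    have T1: "T1 \<in> Tri" "v1 \<in> T1" using mt[OF v(1)] unfolding T1_def by auto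
    have T2: "T2 \<in> Tri" "v2 \<in> T2" using mt[OF v(2)] unfolding T2_def by auto
    obtain u1 where u1: "u1 \<in> T1" "r u1 < r v1" using mt[OF v(1)] unfolding T1_def by auto
    obtain w1 where w1: "w1 \<in> T1" "r v1 < r w1" using mt[OF v(1)] unfolding T1_def by auto
    have V1: "u1 \<in> V" "v1 \<in> V" "w1 \<in> V" using tri_sub T1 u1 w1 by auto
    have d1: "u1 \<noteq> v1" "w1 \<noteq> v1" "u1 \<noteq> w1" using u1 w1 by auto
    have "\<not> r v2 \<le> r w1"
    proof
      assume le: "r v2 \<le> r w1"
      have "PrefT {u\<in>V. r u < r v2} w1" unfolding PrefT_def
        using V1 u1 w1 v(3) d1 tri_edge[OF T1(1)] T1(2)
        by (intro bexI[of _ u1] bexI[of _ v1]) auto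
      hence "PrefT {u\<in>V. r u < r v2} v2" using gr V1 le XV v(2) by blast
      thus False using noPref[OF v(2)] by simp
    qed
    hence w1l: "r w1 < r v2" by simp
    obtain s where s: "T1 = {v1,u1,s}" using tri_third[OF T1(1) T1(2) u1(1) d1(1)[symmetric]] by blast
    have "s = w1" using s w1 d1 by auto
    hence allT1: "\<forall>y\<in>T1. r y < r v2" using s u1 v(3) w1l by auto
    have ra: "r a < r v2" "r b < r v2" using allT1 v(4,5) unfolding T1_def by auto
    have ab2: "a \<noteq> v2" "b \<noteq> v2" using ra by auto
    have aV: "a \<in> V" "b \<in> V" using tri_sub T1 v(4,5) unfolding T1_def by auto
    have "PrefT {u\<in>V. r u < r v2} v2" unfolding PrefT_def
      using aV ra v(8) tri_edge[OF T2(1)] v(6,7) T2(2) ab2 unfolding T2_def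
      by (intro bexI[of _ a] bexI[of _ b]) auto
    thus False using noPref[OF v(2)] by simp
  qed
  have mtTri: "mt ` X \<subseteq> Tri" using mt by auto
  define h where "h D = (SOME T. T \<in> Tri - mt ` X \<and> (\<forall>x\<in>T. \<forall>y\<in>T. x \<noteq> y \<longrightarrow> {x,y} \<in> D))" for D
  have hD: "D \<in> diamonds V E \<Longrightarrow> h D \<in> Tri - mt ` X \<and> (\<forall>x\<in>h D. \<forall>y\<in>h D. x \<noteq> y \<longrightarrow> {x,y} \<in> D)" for D
  proof -
    assume D: "D \<in> diamonds V E"
    then obtain a b c x where Dx: "D = {{a, b}, {a, c}, {b, c}, {a, x}, {b, x}}"
      "{a,b} \<in> E" "{a,c} \<in> E" "{b,c} \<in> E" "{a,x} \<in> E" "{b,x} \<in> E" "distinct [a,b,c,x]"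
      by (rule dia_Mid) blast
    have T1: "{a,b,c} \<in> Tri" and T2: "{a,b,x} \<in> Tri" using triI Dx by auto
    have p1: "\<forall>p\<in>{a,b,c}. \<forall>q\<in>{a,b,c}. p \<noteq> q \<longrightarrow> {p,q} \<in> D" using Dx(1) by (auto simp: insert_commute)
    have p2: "\<forall>p\<in>{a,b,x}. \<forall>q\<in>{a,b,x}. p \<noteq> q \<longrightarrow> {p,q} \<in> D" using Dx(1) by (auto simp: insert_commute)
    have ne12: "{a,b,c} \<noteq> {a,b,x}"
    proof
      assume "{a,b,c} = {a,b,x}" hence "x \<in> {a,b,c}" by simp
      thus False using Dx(7) by auto
    qed
    have "\<not> ({a,b,c} \<in> mt ` X \<and> {a,b,x} \<in> mt ` X)"
    proof
      assume "{a,b,c} \<in> mt ` X \<and> {a,b,x} \<in> mt ` X"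
      then obtain v1 v2 where v12: "v1 \<in> X" "v2 \<in> X" "mt v1 = {a,b,c}" "mt v2 = {a,b,x}" by auto
      have "v1 \<noteq> v2" using v12 ne12 by auto
      hence "r v1 \<noteq> r v2" using rinj XV v12 inj_on_def by (metis subsetD)
      hence "r v1 < r v2 \<or> r v2 < r v1" by linarith
      thus False
      proof
        assume "r v1 < r v2" thus False using dstep[of v1 v2 a b] v12 Dx(7) by auto
      next
        assume "r v2 < r v1" thus False using dstep[of v2 v1 a b] v12 Dx(7) by auto
      qed
    qed
    hence "\<exists>T. T \<in> Tri - mt ` X \<and> (\<forall>x\<in>T. \<forall>y\<in>T. x \<noteq> y \<longrightarrow> {x,y} \<in> D)"
      using T1 T2 p1 p2 by blast
    thus ?thesis unfolding h_def by (rule someI_ex)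
  qed
  have injh: "inj_on h (diamonds V E)"
  proof (rule inj_onI)
    fix D1 D2 assume D: "D1 \<in> diamonds V E" "D2 \<in> diamonds V E" "h D1 = h D2"
    have T: "h D1 \<in> Tri" using hD[OF D(1)] by auto
    then obtain p q s where pqs: "h D1 = {p,q,s}" "p \<noteq> q" by (rule triE) auto
    have "{p,q} \<in> D1" using hD[OF D(1)] pqs by auto
    moreover have "{p,q} \<in> D2" using hD[OF D(2)] pqs D(3) by auto
    ultimately show "D1 = D2" using dj D(1,2) by auto
  qed
  have hsub: "h ` diamonds V E \<subseteq> Tri - mt ` X" using hD by blast
  have "card (diamonds V E) \<le> card (Tri - mt ` X)"
    using card_inj_on_le[OF injh hsub] finTri by auto
  also have "\<dots> = card Tri - card X"
    using card_Diff_subset[OF finite_subset[OF mtTri finTri] mtTri] card_image[OF injmt] by simp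
  finally have dX: "card (diamonds V E) + card X \<le> card Tri"
    using card_mono[OF finTri mtTri] card_image[OF injmt] by linarith
  obtain W A where WA: "phylogeny_digraph V E W A"
    "card (W - Inl ` V) + card V = card Tri + card NTE + card (Xs r root) + 1"
    using upperU[OF root, of r] by blast
  thus ?thesis using dX unfolding X_def by (intro exI[of _ W] exI[of _ A]) auto
qed

end



theorem mainTheorem9:
  fixes V :: "'a set" and E :: "'a set set"
  assumes "simple_graph V E"
    and "connected_graph V E"
    and "K4_free V E"
    and "\<forall>D1\<in>diamonds V E. \<forall>D2\<in>diamonds V E. D1 \<noteq> D2 \<longrightarrow> D1 \<inter> D2 = {}"
  shows "(int (card E) - int (card V) - 2 * int (num_triangles V E) + int (num_diamonds V E) + 1
           \<le> int (phylogeny_number V E)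
         \<and> int (phylogeny_number V E)
           \<le> int (card E) - int (card V) - int (num_triangles V E) + 1)
       \<and> (connected_graph V (minus_edges V E) \<longrightarrow>
           int (phylogeny_number V E) = int (card E) - int (card V) - 2 * int (num_triangles V E)
             + int (num_diamonds V E) + 1)
       \<and> (int (num_components V (minus_edges V E))
              = 2 * int (num_triangles V E) - int (num_diamonds V E) + 1 \<longrightarrow>
           int (phylogeny_number V E) = int (card E) - int (card V) - int (num_triangles V E) + 1)"
proof -
  interpret G V E using assms(1,3,4) by unfold_locales
  define p where "p = phylogeny_number V E"
  define t where "t = card (triangles V E)"
  define d where "d = card (diamonds V E)"
  define m0 where "m0 = card (minus_edges V E)"
  define n where "n = card V"
  define c where "c = num_components V (minus_edges V E)"
  have Vne: "V \<noteq> {}" using assms(2) unfolding connected_graph_def by auto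
  obtain W0 A0 where B: "phylogeny_digraph V E W0 A0"
    "card (W0 - Inl ` V) + card V + card (diamonds V E) \<le> 2 * card (triangles V E) + card (minus_edges V E) + 1"
    using upperB[OF assms(2)] by blast
  have pB: "p \<le> card (W0 - Inl ` V)" unfolding p_def using pn_le[OF B(1)] .
  have "\<exists>k W A. phylogeny_digraph V E W A \<and> card (W - Inl ` V) = k" using B(1) by blast
  hence "\<exists>W A. phylogeny_digraph V E W A \<and> card (W - Inl ` V) = p"
    unfolding p_def phylogeny_number_def by (rule LeastI_ex)
  then obtain W A where WA: "phylogeny_digraph V E W A" "card (W - Inl ` V) = p" by blast
  interpret PD V E W A using assms(1,3,4) WA(1) by unfold_locales
  have L1: "m0 + t + 1 \<le> p + n" using lower1[OF Vne] WA(2) unfolding m0_def t_def n_def by simp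
  have L2: "m0 + c \<le> p + n" using lower2 WA(2) unfolding m0_def c_def n_def by simp
  have U: "p + n + d \<le> 2 * t + m0 + 1" using B(2) pB unfolding n_def d_def t_def m0_def by simp
  have TEc: "card (triangle_edges V E) + d = 3 * t" using TE_count unfolding d_def t_def by simp
  have Em: "card E = card (triangle_edges V E) + m0"
  proof -
    have "E = triangle_edges V E \<union> minus_edges V E" using TE_sub unfolding minus_edges_def by auto
    moreover have "triangle_edges V E \<inter> minus_edges V E = {}" unfolding minus_edges_def by auto
    moreover have "finite (triangle_edges V E)" "finite (minus_edges V E)"
      using finE TE_sub NTE_E' finite_subset by auto
    ultimately show ?thesis unfolding m0_def using card_Un_disjoint by metis
  qed
  have C: "connected_graph V (minus_edges V E) \<Longrightarrow> p + n \<le> t + m0 + 1"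
  proof -
    assume cc: "connected_graph V (minus_edges V E)"
    obtain W1 A1 where W1: "phylogeny_digraph V E W1 A1"
      "card (W1 - Inl ` V) + card V = card (triangles V E) + card (minus_edges V E) + 1"
      using upperC[OF cc] by blast
    have "p \<le> card (W1 - Inl ` V)" unfolding p_def using pn_le[OF W1(1)] .
    thus ?thesis using W1(2) unfolding n_def t_def m0_def by simp
  qed
  have nt: "num_triangles V E = t" unfolding num_triangles_def t_def by simp
  have nd: "num_diamonds V E = d" unfolding num_diamonds_def d_def by simp
  show ?thesis unfolding nt nd p_def[symmetric] c_def[symmetric] n_def[symmetric]
  proof (intro conjI impI)
    show "int (card E) - int n - 2 * int t + int d + 1 \<le> int p" using L1 TEc Em by linarith
    show "int p \<le> int (card E) - int n - int t + 1" using U TEc Em by linarith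
    assume "connected_graph V (minus_edges V E)"
    thus "int p = int (card E) - int n - 2 * int t + int d + 1" using C L1 TEc Em by linarith
  next
    assume "int c = 2 * int t - int d + 1"
    thus "int p = int (card E) - int n - int t + 1" using L2 U TEc Em by linarith
  qed
qed



end
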